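(* Let $G$ be a finite-rank splitter which is $p$-reduced for every prime $p$, and let $0\neq U$ be a pure subgroup of $G$. Then $\mathrm{nuc}\,U=\mathrm{nuc}\,G$.
   Context: For a torsion-free abelian group $G\neq0$, $\mathrm{nuc}\,G$ is the largest subring $R$ of $\mathbb{Q}$ such that $G$ is an $R$-module. A torsion-free $R$-module $G$ over its nucleus $R$ is a finite-rank splitter if $\mathrm{Ext}(G',G)=0$ for all finite-rank $R$-submodules $G'$ of $G$. $G$ is $p$-reduced if $\bigcap_{k\in\omega}p^kG=0$. A subgroup $U\subseteq G$ is pure if $G/U$ is torsion-free. *)

theory Defs
  imports Complex_Main "HOL-Computational_Algebra.Primes" "HOL-Algebra.Group"
begin

text \<open>Torsion-free abelian groups are modelled as subgroups of a real vector space
  (hence of a rational vector space); rational scalars act via of_rat r *R x.\<close>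

definition subgrp :: "'a::real_vector set \<Rightarrow> bool" where
  "subgrp G \<longleftrightarrow> 0 \<in> G \<and> (\<forall>x\<in>G. \<forall>y\<in>G. x + y \<in> G) \<and> (\<forall>x\<in>G. - x \<in> G)"

definition grp_of :: "'a::real_vector set \<Rightarrow> 'a monoid" where
  "grp_of G = \<lparr>carrier = G, mult = (+), one = 0\<rparr>"

definition subring_Q :: "rat set \<Rightarrow> bool" where
  "subring_Q R \<longleftrightarrow> 1 \<in> R \<and> (\<forall>a\<in>R. \<forall>b\<in>R. a + b \<in> R \<and> a - b \<in> R \<and> a * b \<in> R)"

definition is_module :: "rat set \<Rightarrow> 'a::real_vector set \<Rightarrow> bool" where
  "is_module R G \<longleftrightarrow> (\<forall>r\<in>R. \<forall>x\<in>G. of_rat r *\<^sub>R x \<in> G)"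

definition nuc :: "'a::real_vector set \<Rightarrow> rat set" where
  "nuc G = (GREATEST R. subring_Q R \<and> is_module R G)"

definition submodule :: "rat set \<Rightarrow> 'a::real_vector set \<Rightarrow> 'a set \<Rightarrow> bool" where
  "submodule R H G \<longleftrightarrow> H \<subseteq> G \<and> subgrp H \<and> is_module R H"

definition finite_rank :: "'a::real_vector set \<Rightarrow> bool" where
  "finite_rank H \<longleftrightarrow> (\<exists>F. finite F \<and> F \<subseteq> H \<and>
      H \<subseteq> {\<Sum>f\<in>F. of_rat (c f) *\<^sub>R f | c. True})"

text \<open>Every such extension is in bijection with B \<times> A as a set, so it suffices to let the
  carrier of E range over subsets of 'a \<times> 'a.\<close>
definition Ext_zero :: "'a::real_vector set \<Rightarrow> 'a set \<Rightarrow> bool" where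
  "Ext_zero A B \<longleftrightarrow>
    (\<forall>(E :: ('a \<times> 'a) monoid) \<iota> \<pi>.
       comm_group E \<and> \<iota> \<in> hom (grp_of B) E \<and> inj_on \<iota> B \<and>
       \<pi> \<in> hom E (grp_of A) \<and> \<pi> ` carrier E = A \<and>
       \<iota> ` B = {e \<in> carrier E. \<pi> e = 0}
       \<longrightarrow> (\<exists>\<sigma> \<in> hom (grp_of A) E. \<forall>a\<in>A. \<pi> (\<sigma> a) = a))"

definition finite_rank_splitter :: "'a::real_vector set \<Rightarrow> bool" where
  "finite_rank_splitter G \<longleftrightarrow> subgrp G \<and> G \<noteq> {0} \<and>
     (\<forall>G'. submodule (nuc G) G' G \<and> finite_rank G' \<longrightarrow> Ext_zero G' G)"

definition p_reduced :: "nat \<Rightarrow> 'a::real_vector set \<Rightarrow> bool" where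
  "p_reduced p G \<longleftrightarrow> (\<Inter>k. {of_nat (p ^ k) *\<^sub>R x | x. x \<in> G}) = {0}"

definition pure_subgrp :: "'a::real_vector set \<Rightarrow> 'a set \<Rightarrow> bool" where
  "pure_subgrp U G \<longleftrightarrow> U \<subseteq> G \<and> subgrp U \<and>
     (\<forall>x\<in>G. \<forall>n::int. n \<noteq> 0 \<and> of_int n *\<^sub>R x \<in> U \<longrightarrow> x \<in> U)"

end

theory Submission
  imports Defs
begin

definition nucS :: "'a::real_vector set \<Rightarrow> rat set" where
  "nucS H = {r. \<forall>x\<in>H. of_rat r *\<^sub>R x \<in> H}"

lemma nuc_eq:
  assumes "subgrp H"
  shows "nuc H = nucS H"
proof -
  have sub: "subring_Q (nucS H)"
  proof -
    have "a + b \<in> nucS H \<and> a - b \<in> nucS H \<and> a * b \<in> nucS H"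
      if a: "a \<in> nucS H" and b: "b \<in> nucS H" for a b
    proof (intro conjI)
      have ax: "of_rat a *\<^sub>R x \<in> H" and bx: "of_rat b *\<^sub>R x \<in> H" if "x \<in> H" for x
        using a b that unfolding nucS_def by auto
      show "a + b \<in> nucS H" unfolding nucS_def using ax bx assms
        by (simp add: of_rat_add scaleR_add_left subgrp_def)
      show "a - b \<in> nucS H" unfolding nucS_def
      proof (intro CollectI ballI)
        fix x assume x: "x \<in> H"
        have "- (of_rat b *\<^sub>R x) \<in> H" using bx x assms by (simp add: subgrp_def)
        then show "of_rat (a - b) *\<^sub>R x \<in> H" using ax x assms unfolding subgrp_def
          by (metis of_rat_diff scaleR_diff_left diff_conv_add_uminus)
      qed
      show "a * b \<in> nucS H" unfolding nucS_def
      proof (intro CollectI ballI)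
        fix x assume x: "x \<in> H"
        have "of_rat a *\<^sub>R (of_rat b *\<^sub>R x) \<in> H" using ax bx x by blast
        then show "of_rat (a * b) *\<^sub>R x \<in> H" by (simp add: of_rat_mult)
      qed
    qed
    moreover have "1 \<in> nucS H" unfolding nucS_def by simp
    ultimately show ?thesis unfolding subring_Q_def by blast
  qed
  have mod: "is_module (nucS H) H" unfolding is_module_def nucS_def by blast
  have le: "R \<subseteq> nucS H" if "subring_Q R \<and> is_module R H" for R
    using that unfolding is_module_def nucS_def by blast
  show ?thesis unfolding nuc_def
    by (rule Greatest_equality) (use sub mod le in blast)+
qed

lemma int_mult_in:
  assumes "subgrp H" "x \<in> H"
  shows "of_int n *\<^sub>R x \<in> H"
proof -
  have nat: "of_nat m *\<^sub>R x \<in> H" for m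
    by (induction m) (use assms in \<open>auto simp: subgrp_def scaleR_add_left\<close>)
  show ?thesis
  proof (cases "n \<ge> 0")
    case True
    then show ?thesis using nat[of "nat n"] by simp
  next
    case False
    then have "of_int n *\<^sub>R x = - (of_nat (nat (-n)) *\<^sub>R x)" by simp
    then show ?thesis using nat[of "nat (-n)"] assms by (simp add: subgrp_def)
  qed
qed

lemma nucS_ints:
  assumes H: "subgrp H" and "(of_int n :: rat) = r"
  shows "r \<in> nucS H"
  unfolding nucS_def
proof (intro CollectI ballI)
  fix x assume "x \<in> H"
  then have "of_int n *\<^sub>R x \<in> H" using int_mult_in[OF H] by blast
  then show "of_rat r *\<^sub>R x \<in> H" using assms(2)[symmetric] by simp
qed

lemma nucS_add: "subgrp H \<Longrightarrow> a \<in> nucS H \<Longrightarrow> b \<in> nucS H \<Longrightarrow> a + b \<in> nucS H"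
  unfolding nucS_def subgrp_def by (auto simp: of_rat_add scaleR_add_left)

lemma nucS_mult: assumes "a \<in> nucS H" "b \<in> nucS H" shows "a * b \<in> nucS H"
  unfolding nucS_def
proof (intro CollectI ballI)
  fix x assume "x \<in> H"
  then have "of_rat a *\<^sub>R (of_rat b *\<^sub>R x) \<in> H" using assms unfolding nucS_def by blast
  then show "of_rat (a * b) *\<^sub>R x \<in> H" by (simp add: of_rat_mult)
qed

lemma nucS_Z:
  assumes H: "subgrp H" and HG: "H \<subseteq> G" and nz: "H \<noteq> {0}"
    and red: "\<forall>p. prime p \<longrightarrow> p_reduced p G"
  shows "nucS H = range of_int"
proof
  show "range of_int \<subseteq> nucS H" using nucS_ints[OF H] by blast
next
  show "nucS H \<subseteq> range of_int"
  proof
    fix r assume r: "r \<in> nucS H"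
    show "r \<in> range of_int"
    proof (rule ccontr)
      assume nint: "r \<notin> range of_int"
      obtain a b where q: "quotient_of r = (a, b)" by (cases "quotient_of r")
      have rab: "r = of_int a / of_int b" and b0: "b > 0" and cop: "coprime a b"
        using quotient_of_div[OF q] quotient_of_denom_pos[OF q] quotient_of_coprime[OF q] by auto
      have b1: "b \<noteq> 1" using nint rab by auto
      then obtain p where p: "prime p" "p dvd b"
        using b0 by (metis prime_divisor_exists zdvd1_eq abs_of_pos less_irrefl order.strict_iff_not)
      obtain u v where uv: "u * a + v * b = 1"
        using cop by (metis bezout_int coprime_iff_gcd_eq_1)
      obtain c where c: "b = p * c" using p(2) by blast
      have "1 / of_int p = of_int c * (of_int u * r + of_int v :: rat)"
      proof -
        have pc: "of_int p \<noteq> (0::rat)" "of_int c \<noteq> (0::rat)" using b0 c p(1) by auto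
        have "of_int c * (of_int u * r + of_int v) = of_int c * ((of_int u * of_int a + of_int v * of_int b) / of_int b :: rat)"
          using b0 rab by (simp add: field_simps)
        also have "\<dots> = of_int c / of_int b" using uv
          by (metis (mono_tags, opaque_lifting) of_int_1 of_int_add of_int_mult times_divide_eq_right mult_1_right)
        also have "\<dots> = 1 / of_int p" using c pc by simp
        finally show ?thesis by simp
      qed
      moreover have "of_int c * (of_int u * r + of_int v :: rat) \<in> nucS H"
        by (rule nucS_mult[OF nucS_ints[OF H refl] nucS_add[OF H nucS_mult[OF nucS_ints[OF H refl] r] nucS_ints[OF H refl]]])
      ultimately have ip: "1 / of_int p \<in> nucS H" by simp
      have pn: "nat p > 1" "prime (nat p)" "p > 1" using prime_gt_1_int[OF p(1)] p(1) by simp_all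
      obtain x where x: "x \<in> H" "x \<noteq> 0" using nz H unfolding subgrp_def by blast
      have "x \<in> {of_nat (nat p ^ k) *\<^sub>R y | y. y \<in> H}" for k
      proof (induction k)
        case 0 then show ?case using x by auto
      next
        case (Suc k)
        then obtain y where y: "x = of_nat (nat p ^ k) *\<^sub>R y" "y \<in> H" by blast
        have z: "of_rat (1 / of_int p) *\<^sub>R y \<in> H" using ip y(2) unfolding nucS_def by blast
        have pp: "of_int p \<noteq> (0::real)" using pn by auto
        have "of_nat (nat p ^ Suc k) *\<^sub>R (of_rat (1 / of_int p) *\<^sub>R y) = x"
          using y(1) pn pp by (simp add: of_rat_divide field_simps)
        then show ?case using z by (metis (mono_tags, lifting) mem_Collect_eq)
      qed
      then have "x \<in> (\<Inter>k. {of_nat (nat p ^ k) *\<^sub>R y | y. y \<in> G})" using HG by blast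
      moreover have "(\<Inter>k. {of_nat (nat p ^ k) *\<^sub>R y | y. y \<in> G}) = {0}"
        using red pn(2) unfolding p_reduced_def by blast
      ultimately show False using x(2) by blast
    qed
  qed
qed

theorem corollary4p4:
  fixes G U :: "'a::real_vector set"
  assumes "finite_rank_splitter G"
    and "\<forall>p. prime p \<longrightarrow> p_reduced p G"
    and "pure_subgrp U G"
    and "U \<noteq> {0}"
  shows "nuc U = nuc G"
proof -
  have G: "subgrp G" "G \<noteq> {0}" using assms(1) unfolding finite_rank_splitter_def by auto
  have U: "subgrp U" "U \<subseteq> G" using assms(3) unfolding pure_subgrp_def by auto
  show ?thesis
    using nuc_eq[OF G(1)] nuc_eq[OF U(1)] nucS_Z[OF U(1) U(2) assms(4) assms(2)]
      nucS_Z[OF G(1) order.refl G(2) assms(2)] by simp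
qed

end
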